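(* A brace $B$ is weakly supersoluble if and only if it is supersoluble.
   Context: A brace (skew left brace) is a set $B$ with two binary operations $+$ and $\cdot$ such that $(B,+)$ and $(B,\cdot)$ are groups and $a(b+c)=ab-a+ac$ for all $a,b,c\in B$. $\lambda_a(b)=-a+ab$ defines a homomorphism $\lambda\colon(B,\cdot)\to\operatorname{Aut}(B,+)$. An ideal is a subset that is a subgroup of both groups, normal in both, and invariant under all $\lambda_b$; quotients by ideals are braces. $\operatorname{Soc}(B)=\operatorname{Ker}\lambda\cap Z(B,+)$. $B$ is supersoluble if there is a finite chain of ideals $\{0\}=I_0\le\dots\le I_n=B$ such that for each $i$, either $(I_{i+1}/I_i,+)$ is infinite cyclic and $I_{i+1}/I_i\le\operatorname{Soc}(B/I_i)$, or $I_{i+1}/I_i$ has prime order. $B$ is weakly supersoluble if there is a finite chain of ideals $\{0\}=I_0\le\dots\le I_n=B$ such that for each $i$, either $(I_{i+1}/I_i,+)$ is an infinite cyclic subgroup contained in the centre of $(B/I_i,+)$, or $I_{i+1}/I_i$ has prime order. *)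

theory Defs
  imports "HOL-Algebra.Algebra" "HOL-Computational_Algebra.Primes"
begin

record 'a brace = "'a partial_object" +
  bplus :: "'a \<Rightarrow> 'a \<Rightarrow> 'a"
  btimes :: "'a \<Rightarrow> 'a \<Rightarrow> 'a"
  bzero :: 'a
  bone :: 'a

definition add_grp :: "('a, 'b) brace_scheme \<Rightarrow> 'a monoid" where
  "add_grp B = \<lparr>carrier = carrier B, monoid.mult = bplus B, monoid.one = bzero B\<rparr>"

definition mul_grp :: "('a, 'b) brace_scheme \<Rightarrow> 'a monoid" where
  "mul_grp B = \<lparr>carrier = carrier B, monoid.mult = btimes B, monoid.one = bone B\<rparr>"

definition bneg :: "('a, 'b) brace_scheme \<Rightarrow> 'a \<Rightarrow> 'a" where
  "bneg B a = inv\<^bsub>add_grp B\<^esub> a"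

definition is_brace :: "('a, 'b) brace_scheme \<Rightarrow> bool" where
  "is_brace B \<longleftrightarrow> group (add_grp B) \<and> group (mul_grp B) \<and>
     (\<forall>a\<in>carrier B. \<forall>b\<in>carrier B. \<forall>c\<in>carrier B.
        btimes B a (bplus B b c) = bplus B (bplus B (btimes B a b) (bneg B a)) (btimes B a c))"

definition blambda :: "('a, 'b) brace_scheme \<Rightarrow> 'a \<Rightarrow> 'a \<Rightarrow> 'a" where
  "blambda B a b = bplus B (bneg B a) (btimes B a b)"

definition brace_ideal :: "'a set \<Rightarrow> ('a, 'b) brace_scheme \<Rightarrow> bool" where
  "brace_ideal I B \<longleftrightarrow> normal I (add_grp B) \<and> normal I (mul_grp B) \<and>
     (\<forall>b\<in>carrier B. blambda B b ` I \<subseteq> I)"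

definition add_centre :: "('a, 'b) brace_scheme \<Rightarrow> 'a set" where
  "add_centre B = {x \<in> carrier B. \<forall>y\<in>carrier B. bplus B x y = bplus B y x}"

definition Soc :: "('a, 'b) brace_scheme \<Rightarrow> 'a set" where
  "Soc B = {a \<in> carrier B. \<forall>b\<in>carrier B. blambda B a b = b} \<inter> add_centre B"

definition quot_brace :: "('a, 'b) brace_scheme \<Rightarrow> 'a set \<Rightarrow> 'a set brace" where
  "quot_brace B I = \<lparr>carrier = rcosets\<^bsub>add_grp B\<^esub> I,
      bplus = set_mult (add_grp B), btimes = set_mult (mul_grp B),
      bzero = I, bone = I\<rparr>"

text \<open>The image J/I of an ideal J \<supseteq> I inside B/I.\<close>
definition quot_sub :: "('a, 'b) brace_scheme \<Rightarrow> 'a set \<Rightarrow> 'a set \<Rightarrow> 'a set set" where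
  "quot_sub B J I = (\<lambda>a. I #>\<^bsub>add_grp B\<^esub> a) ` J"

definition add_inf_cyclic :: "('a, 'b) brace_scheme \<Rightarrow> 'a set \<Rightarrow> bool" where
  "add_inf_cyclic Q Y \<longleftrightarrow> infinite Y \<and>
     (\<exists>g\<in>carrier Q. Y = range (\<lambda>k::int. pow (add_grp Q) g k))"

definition ideal_chain :: "('a, 'b) brace_scheme \<Rightarrow> (nat \<Rightarrow> 'a set) \<Rightarrow> nat \<Rightarrow> bool" where
  "ideal_chain B I n \<longleftrightarrow> I 0 = {bzero B} \<and> I n = carrier B \<and>
     (\<forall>i\<le>n. brace_ideal (I i) B) \<and> (\<forall>i<n. I i \<subseteq> I (Suc i))"

definition supersoluble :: "('a, 'b) brace_scheme \<Rightarrow> bool" where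
  "supersoluble B \<longleftrightarrow> (\<exists>I n. ideal_chain B I n \<and>
     (\<forall>i<n. let Q = quot_brace B (I i); Y = quot_sub B (I (Suc i)) (I i) in
        (add_inf_cyclic Q Y \<and> Y \<subseteq> Soc Q) \<or> Factorial_Ring.prime (card Y)))"

definition weakly_supersoluble :: "('a, 'b) brace_scheme \<Rightarrow> bool" where
  "weakly_supersoluble B \<longleftrightarrow> (\<exists>I n. ideal_chain B I n \<and>
     (\<forall>i<n. let Q = quot_brace B (I i); Y = quot_sub B (I (Suc i)) (I i) in
        (add_inf_cyclic Q Y \<and> Y \<subseteq> add_centre Q) \<or> Factorial_Ring.prime (card Y)))"

end

theory Submission
  imports Defs
begin

lemma add_grp_simps [simp]:
  "carrier (add_grp B) = carrier B" "monoid.mult (add_grp B) = bplus B" "one (add_grp B) = bzero B"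
  by (simp_all add: add_grp_def)

lemma mul_grp_simps [simp]:
  "carrier (mul_grp B) = carrier B" "monoid.mult (mul_grp B) = btimes B" "one (mul_grp B) = bone B"
  by (simp_all add: mul_grp_def)

locale brace_loc =
  fixes B :: "('a, 'b) brace_scheme"
  assumes br: "is_brace B"
begin

sublocale A: group "add_grp B" using br by (simp add: is_brace_def)
sublocale M: group "mul_grp B" using br by (simp add: is_brace_def)

abbreviation pl (infixl "\<boxplus>" 65) where "x \<boxplus> y \<equiv> bplus B x y"
abbreviation ti (infixl "\<odot>" 70) where "x \<odot> y \<equiv> btimes B x y"
abbreviation ng where "ng x \<equiv> inv\<^bsub>add_grp B\<^esub> x"
abbreviation mi where "mi x \<equiv> inv\<^bsub>mul_grp B\<^esub> x"
abbreviation ze where "ze \<equiv> bzero B"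
abbreviation lam where "lam a b \<equiv> ng a \<boxplus> (a \<odot> b)"

lemma bneg_eq: "bneg B a = ng a" by (simp add: bneg_def)
lemma blambda_eq: "blambda B a b = lam a b" by (simp add: blambda_def bneg_def)

lemma brace_id:
  assumes "a \<in> carrier B" "b \<in> carrier B" "c \<in> carrier B"
  shows "a \<odot> (b \<boxplus> c) = a \<odot> b \<boxplus> ng a \<boxplus> a \<odot> c"
  using br assms by (simp add: is_brace_def bneg_def)

lemma cl [simp, intro]:
  "x \<in> carrier B \<Longrightarrow> y \<in> carrier B \<Longrightarrow> x \<boxplus> y \<in> carrier B"
  "x \<in> carrier B \<Longrightarrow> y \<in> carrier B \<Longrightarrow> x \<odot> y \<in> carrier B"
  "x \<in> carrier B \<Longrightarrow> ng x \<in> carrier B"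
  "x \<in> carrier B \<Longrightarrow> mi x \<in> carrier B"
  "ze \<in> carrier B" "bone B \<in> carrier B"
  using A.m_closed M.m_closed A.inv_closed M.inv_closed A.one_closed M.one_closed by simp_all

lemma A_assoc: "x \<in> carrier B \<Longrightarrow> y \<in> carrier B \<Longrightarrow> z \<in> carrier B \<Longrightarrow> x \<boxplus> y \<boxplus> z = x \<boxplus> (y \<boxplus> z)"
  using A.m_assoc by simp
lemma M_assoc: "x \<in> carrier B \<Longrightarrow> y \<in> carrier B \<Longrightarrow> z \<in> carrier B \<Longrightarrow> x \<odot> y \<odot> z = x \<odot> (y \<odot> z)"
  using M.m_assoc by simp

lemma A_simps [simp]:
  "x \<in> carrier B \<Longrightarrow> ze \<boxplus> x = x"
  "x \<in> carrier B \<Longrightarrow> x \<boxplus> ze = x"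
  "x \<in> carrier B \<Longrightarrow> ng x \<boxplus> x = ze"
  "x \<in> carrier B \<Longrightarrow> x \<boxplus> ng x = ze"
  "x \<in> carrier B \<Longrightarrow> y \<in> carrier B \<Longrightarrow> ng x \<boxplus> (x \<boxplus> y) = y"
  "x \<in> carrier B \<Longrightarrow> y \<in> carrier B \<Longrightarrow> x \<boxplus> (ng x \<boxplus> y) = y"
  "x \<in> carrier B \<Longrightarrow> \<not> ng (ng x) = x \<Longrightarrow> False"
  "x \<in> carrier B \<Longrightarrow> y \<in> carrier B \<Longrightarrow> ng (x \<boxplus> y) = ng y \<boxplus> ng x"
  "ng ze = ze"
  using A.l_one A.r_one A.l_inv A.r_inv A.inv_inv A.inv_mult_group A.inv_one
  by (simp_all add: A_assoc[symmetric])

lemma ng_ze [simp]: "ng ze = ze"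
  using A.inv_one by simp

lemma ngng [simp]: "x \<in> carrier B \<Longrightarrow> ng (ng x) = x"
  using A.inv_inv by simp

lemma one_eq: "bone B = ze"
proof -
  have "bone B \<odot> (ze \<boxplus> ze) = bone B \<odot> ze \<boxplus> ng (bone B) \<boxplus> bone B \<odot> ze"
    by (rule brace_id) auto
  then have "ze = ng (bone B)" using M.l_one by (simp add: A_assoc)
  then show ?thesis by (metis A.inv_one cl(6) add_grp_simps(3) ngng)
qed

lemma M_simps [simp]:
  "x \<in> carrier B \<Longrightarrow> ze \<odot> x = x"
  "x \<in> carrier B \<Longrightarrow> x \<odot> ze = x"
  "x \<in> carrier B \<Longrightarrow> mi x \<odot> x = ze"
  "x \<in> carrier B \<Longrightarrow> x \<odot> mi x = ze"
  "x \<in> carrier B \<Longrightarrow> y \<in> carrier B \<Longrightarrow> mi x \<odot> (x \<odot> y) = y"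
  "x \<in> carrier B \<Longrightarrow> y \<in> carrier B \<Longrightarrow> x \<odot> (mi x \<odot> y) = y"
  "x \<in> carrier B \<Longrightarrow> mi (mi x) = x"
  "x \<in> carrier B \<Longrightarrow> y \<in> carrier B \<Longrightarrow> mi (x \<odot> y) = mi y \<odot> mi x"
  "mi ze = ze"
  using M.l_one M.r_one M.l_inv M.r_inv M.inv_inv M.inv_mult_group M.inv_one
  by (simp_all add: M_assoc[symmetric] one_eq)

lemma lam_closed [simp, intro]: "a \<in> carrier B \<Longrightarrow> b \<in> carrier B \<Longrightarrow> lam a b \<in> carrier B"
  by simp

lemma mul_eq: "a \<in> carrier B \<Longrightarrow> b \<in> carrier B \<Longrightarrow> a \<odot> b = a \<boxplus> lam a b"
  by (simp add: A_assoc[symmetric])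

lemma lam_add: "a \<in> carrier B \<Longrightarrow> b \<in> carrier B \<Longrightarrow> c \<in> carrier B \<Longrightarrow>
   lam a (b \<boxplus> c) = lam a b \<boxplus> lam a c"
  by (simp add: brace_id A_assoc)

lemma lam_hom: "a \<in> carrier B \<Longrightarrow> lam a \<in> hom (add_grp B) (add_grp B)"
  by (rule homI) (simp_all add: lam_add)

lemma lam_group_hom: "a \<in> carrier B \<Longrightarrow> group_hom (add_grp B) (add_grp B) (lam a)"
  by (simp add: group_hom_def group_hom_axioms_def lam_hom A.group_axioms)

lemma lam_zero [simp]: "a \<in> carrier B \<Longrightarrow> lam a ze = ze"
  using group_hom.hom_one[OF lam_group_hom] by simp

lemma lam_neg: "a \<in> carrier B \<Longrightarrow> b \<in> carrier B \<Longrightarrow> lam a (ng b) = ng (lam a b)"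
  using group_hom.hom_inv[OF lam_group_hom] by simp

lemma lam_pow: "a \<in> carrier B \<Longrightarrow> b \<in> carrier B \<Longrightarrow>
   lam a (b [^]\<^bsub>add_grp B\<^esub> (k::int)) = (lam a b) [^]\<^bsub>add_grp B\<^esub> k"
  using group_hom.hom_int_pow[OF lam_group_hom] by simp

lemma lam_mul: assumes "a \<in> carrier B" "b \<in> carrier B" "c \<in> carrier B"
  shows "lam (a \<odot> b) c = lam a (lam b c)"
proof -
  have "lam a (lam b c) = lam a (ng b) \<boxplus> lam a (b \<odot> c)"
    using assms by (simp add: lam_add)
  also have "\<dots> = ng (lam a b) \<boxplus> (ng a \<boxplus> (a \<odot> b) \<odot> c)"
    using assms by (simp add: lam_neg M_assoc)
  also have "\<dots> = ng (a \<odot> b) \<boxplus> (a \<odot> b) \<odot> c"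
    using assms by (simp add: A_assoc)
  finally show ?thesis by simp
qed

lemma lam_one [simp]: "c \<in> carrier B \<Longrightarrow> lam ze c = c"
  by simp

lemma lam_inv1 [simp]: "a \<in> carrier B \<Longrightarrow> c \<in> carrier B \<Longrightarrow> lam (mi a) (lam a c) = c"
  by (simp only: lam_mul[symmetric] cl) simp

lemma lam_inv2 [simp]: "a \<in> carrier B \<Longrightarrow> c \<in> carrier B \<Longrightarrow> lam a (lam (mi a) c) = c"
  by (simp only: lam_mul[symmetric] cl) simp

end

locale core_loc = brace_loc +
  fixes g
  assumes g: "g \<in> carrier B"
    and inj: "inj (\<lambda>k::int. g [^]\<^bsub>add_grp B\<^esub> k)"
    and cen: "\<And>k x. x \<in> carrier B \<Longrightarrow> g [^]\<^bsub>add_grp B\<^esub> (k::int) \<boxplus> x = x \<boxplus> g [^]\<^bsub>add_grp B\<^esub> k"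
    and lamY: "\<And>b k. b \<in> carrier B \<Longrightarrow> \<exists>l. lam b (g [^]\<^bsub>add_grp B\<^esub> (k::int)) = g [^]\<^bsub>add_grp B\<^esub> (l::int)"
    and conjY: "\<And>b k. b \<in> carrier B \<Longrightarrow> \<exists>l. mi b \<odot> g [^]\<^bsub>add_grp B\<^esub> (k::int) \<odot> b = g [^]\<^bsub>add_grp B\<^esub> (l::int)"
begin

definition e :: "int \<Rightarrow> 'a" where "e k = g [^]\<^bsub>add_grp B\<^esub> k"

lemma e_closed [simp, intro]: "e k \<in> carrier B"
  using A.int_pow_closed g by (simp add: e_def)

lemma e_add: "e k \<boxplus> e l = e (k + l)"
  using A.int_pow_mult g by (simp add: e_def)

lemma e_0 [simp]: "e 0 = ze" by (simp add: e_def)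
lemma e_1: "e 1 = g" using g by (simp add: e_def)

lemma e_neg: "ng (e k) = e (- k)"
  using A.int_pow_neg g by (simp add: e_def)

lemma e_inj: "e k = e l \<longleftrightarrow> k = l"
  using inj by (auto simp add: e_def inj_def)

lemma e_pow: "(e k) [^]\<^bsub>add_grp B\<^esub> l = e (k * l)"
  using A.int_pow_pow g by (simp add: e_def)

lemma e_cen: "x \<in> carrier B \<Longrightarrow> e k \<boxplus> x = x \<boxplus> e k"
  unfolding e_def by (rule cen)

lemma lamY': "b \<in> carrier B \<Longrightarrow> \<exists>l. lam b (e k) = e l"
  using lamY by (simp add: e_def)

lemma conjY': "b \<in> carrier B \<Longrightarrow> \<exists>l. mi b \<odot> e k \<odot> b = e l"
  using conjY by (simp add: e_def)

definition sg :: "'a \<Rightarrow> int" where "sg b = (THE s. lam b g = e s)"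

lemma sg_prop: "b \<in> carrier B \<Longrightarrow> lam b g = e (sg b)"
proof -
  assume b: "b \<in> carrier B"
  obtain l where l: "lam b (e 1) = e l" using lamY'[OF b] by blast
  have "\<exists>!s. lam b g = e s" using l e_inj by (metis e_1)
  then show ?thesis unfolding sg_def by (rule theI')
qed

lemma lam_e: "b \<in> carrier B \<Longrightarrow> lam b (e k) = e (sg b * k)"
proof -
  assume b: "b \<in> carrier B"
  have "lam b (e k) = (lam b g) [^]\<^bsub>add_grp B\<^esub> k"
    using lam_pow[OF b g] by (simp add: e_def)
  also have "\<dots> = e (sg b * k)" using sg_prop[OF b] e_pow by simp
  finally show ?thesis .
qed

lemma sg_mul: "a \<in> carrier B \<Longrightarrow> b \<in> carrier B \<Longrightarrow> sg (a \<odot> b) = sg a * sg b"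
proof -
  assume a: "a \<in> carrier B" and b: "b \<in> carrier B"
  have "e (sg (a \<odot> b)) = lam (a \<odot> b) (e 1)" using sg_prop a b e_1 by simp
  also have "\<dots> = lam a (lam b (e 1))" using lam_mul a b by simp
  also have "\<dots> = e (sg a * sg b)" using lam_e a b by simp
  finally show ?thesis using e_inj by blast
qed

lemma sg_ze: "sg ze = 1"
proof -
  have "e (sg ze) = e 1" using sg_prop[of ze] e_1 g by simp
  then show ?thesis using e_inj by blast
qed

lemma sg_pm: "b \<in> carrier B \<Longrightarrow> sg b = 1 \<or> sg b = -1"
proof -
  assume b: "b \<in> carrier B"
  have "sg b * sg (mi b) = 1" using sg_mul[of b "mi b"] b sg_ze by simp
  then show ?thesis using zmult_eq_1_iff by blast
qed

lemma sg_sq: "b \<in> carrier B \<Longrightarrow> sg b * sg b = 1"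
  using sg_pm[of b] by auto

lemma mul_e: "e k \<odot> e l = e (k + sg (e k) * l)"
proof -
  have "e k \<odot> e l = e k \<boxplus> lam (e k) (e l)" by (rule mul_eq) simp_all
  also have "\<dots> = e (k + sg (e k) * l)" by (simp only: lam_e e_closed e_add)
  finally show ?thesis .
qed

lemma sg_rec: "sg (e (k + sg (e k) * l)) = sg (e k) * sg (e l)"
  using sg_mul[of "e k" "e l"] mul_e by simp

lemma sg_e2: "sg (e 2) = 1"
proof -
  have A: "sg (e k) * sg (e (- sg (e k) * k)) = 1" for k
  proof -
    have eq: "k + sg (e k) * (- sg (e k) * k) = 0"
      using sg_sq[of "e k"] by (simp add: algebra_simps)
    show ?thesis using sg_rec[of k "- sg (e k) * k", unfolded eq] sg_ze by simp
  qed
  consider "sg (e 1) = 1" | "sg (e 1) = -1" using sg_pm by blast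
  then show ?thesis
  proof cases
    case 1
    then show ?thesis using sg_rec[of 1 1] by simp
  next
    case 2
    have "sg (e (-1)) \<noteq> 1"
    proof
      assume "sg (e (-1)) = 1"
      then show False using A[of "-1"] 2 by simp
    qed
    then have "sg (e (-1)) = -1" using sg_pm by blast
    then show ?thesis using sg_rec[of 1 "-1"] 2 by simp
  qed
qed


lemma sg_conj: "b \<in> carrier B \<Longrightarrow> y \<in> carrier B \<Longrightarrow> sg (mi b \<odot> y \<odot> b) = sg y"
proof -
  assume b: "b \<in> carrier B" and y: "y \<in> carrier B"
  have "sg (mi b \<odot> y \<odot> b) = sg (mi b) * sg y * sg b" using sg_mul b y by simp
  also have "\<dots> = (sg (mi b) * sg b) * sg y" by simp
  also have "sg (mi b) * sg b = 1" using sg_mul[of "mi b" b] b sg_ze by simp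
  finally show ?thesis by simp
qed

lemma arith_pm2:
  fixes p q :: int
  assumes p0: "p \<noteq> 0" and cover: "\<And>t. \<exists>j. t = j * p \<or> t = j * p + q"
    and nq: "\<And>j. j * p \<noteq> q"
  shows "p = 2 \<or> p = -2"
proof -
  have not1: "p \<noteq> 1 \<and> p \<noteq> -1"
  proof
    show "p \<noteq> 1" using nq[of q] by auto
    show "p \<noteq> -1" using nq[of "-q"] by auto
  qed
  obtain j1 where j1: "1 = j1 * p \<or> 1 = j1 * p + q" using cover by blast
  obtain j2 where j2: "2 = j2 * p \<or> 2 = j2 * p + q" using cover by blast
  have "p dvd 1 \<or> p dvd 2"
  proof (cases "1 = j1 * p")
    case True then show ?thesis by (metis dvd_triv_right)
  next
    case False
    then have q: "q = 1 - j1 * p" using j1 by auto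
    show ?thesis
    proof (cases "2 = j2 * p")
      case True then show ?thesis by (metis dvd_triv_right)
    next
      case False
      then have "2 = j2 * p + 1 - j1 * p" using j2 q by auto
      then have "1 = (j2 - j1) * p" by (simp add: algebra_simps)
      then show ?thesis by (metis dvd_triv_right)
    qed
  qed
  then have "p = 1 \<or> p = -1 \<or> p = 2 \<or> p = -2"
  proof
    assume "p dvd 1" then show ?thesis by (simp add: zdvd1_eq abs_if split: if_splits)
  next
    assume h: "p dvd 2"
    then have "\<bar>p\<bar> \<le> 2" using zdvd_imp_le[of "\<bar>p\<bar>" 2] by simp
    then have "p \<in> {-2,-1,0,1,2}" by auto
    then show ?thesis using p0 by auto
  qed
  then show ?thesis using not1 by auto
qed

lemma conj2: assumes b: "b \<in> carrier B"
  shows "mi b \<odot> e 2 \<odot> b = e 2 \<or> mi b \<odot> e 2 \<odot> b = e (-2)"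
proof -
  define \<phi> where "\<phi> k = (THE l. mi b \<odot> e k \<odot> b = e l)" for k
  have \<phi>: "mi b \<odot> e k \<odot> b = e (\<phi> k)" for k
  proof -
    obtain l where l: "mi b \<odot> e k \<odot> b = e l" using conjY' b by blast
    have "\<exists>!l. mi b \<odot> e k \<odot> b = e l" using l e_inj by metis
    then show ?thesis unfolding \<phi>_def by (rule theI')
  qed
  have bk: "x = b \<odot> (mi b \<odot> x \<odot> b) \<odot> mi b" if "x \<in> carrier B" for x
    using that b by (simp add: M_assoc)
  have \<phi>inj: "k = k'" if "\<phi> k = \<phi> k'" for k k'
  proof -
    have "e k = e k'" using bk[of "e k"] bk[of "e k'"] \<phi>[of k] \<phi>[of k'] that by simp
    then show ?thesis using e_inj by blast
  qed
  have \<phi>surj: "\<exists>k. \<phi> k = t" for t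
  proof -
    obtain k where k: "mi (mi b) \<odot> e t \<odot> mi b = e k" using conjY'[of "mi b" t] b by auto
    have "mi b \<odot> e k \<odot> b = e t" unfolding k[symmetric] using b by (simp add: M_assoc)
    then have "e (\<phi> k) = e t" using \<phi> by simp
    then show ?thesis using e_inj by blast
  qed
  have cj: "mi b \<odot> (x \<odot> y) \<odot> b = (mi b \<odot> x \<odot> b) \<odot> (mi b \<odot> y \<odot> b)"
    if "x \<in> carrier B" "y \<in> carrier B" for x y
    using that b by (simp add: M_assoc)
  have \<phi>rec: "\<phi> (k + sg (e k) * l) = \<phi> k + sg (e k) * \<phi> l" for k l
  proof -
    have "e (\<phi> (k + sg (e k) * l)) = mi b \<odot> (e k \<odot> e l) \<odot> b" using \<phi> mul_e by simp
    also have "\<dots> = e (\<phi> k) \<odot> e (\<phi> l)" using cj[of "e k" "e l"] \<phi> by simp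
    also have "\<dots> = e (\<phi> k + sg (e (\<phi> k)) * \<phi> l)" by (rule mul_e)
    also have "sg (e (\<phi> k)) = sg (e k)" using \<phi>[of k] sg_conj[OF b, of "e k"] by simp
    finally show ?thesis using e_inj by blast
  qed
  have \<phi>2: "\<phi> (2 + l) = \<phi> 2 + \<phi> l" for l using \<phi>rec[of 2 l] sg_e2 by simp
  have \<phi>0: "\<phi> 0 = 0"
  proof -
    have "e (\<phi> 0) = e 0" using \<phi>[of 0] b by simp
    then show ?thesis using e_inj by blast
  qed
  have lin: "\<phi> (2 * j + r) = j * \<phi> 2 + \<phi> r" for j r
  proof (induct j rule: int_induct[where k = 0])
    case base then show ?case by simp
  next
    case (step1 i)
    have "\<phi> (2 * (i + 1) + r) = \<phi> (2 + (2 * i + r))" by (simp add: algebra_simps)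
    also have "\<dots> = \<phi> 2 + \<phi> (2 * i + r)" by (rule \<phi>2)
    finally show ?case using step1 by (simp add: algebra_simps)
  next
    case (step2 i)
    have "\<phi> (2 * i + r) = \<phi> (2 + (2 * (i - 1) + r))" by (simp add: algebra_simps)
    also have "\<dots> = \<phi> 2 + \<phi> (2 * (i - 1) + r)" by (rule \<phi>2)
    finally show ?case using step2 by (simp add: algebra_simps)
  qed
  have cover: "\<exists>j. t = j * \<phi> 2 \<or> t = j * \<phi> 2 + \<phi> 1" for t
  proof -
    obtain k where k: "\<phi> k = t" using \<phi>surj by blast
    have kk: "k = 2 * (k div 2) + k mod 2" by simp
    have "k mod 2 = 0 \<or> k mod 2 = 1" by auto
    then show ?thesis
    proof
      assume "k mod 2 = 0"
      then have "t = (k div 2) * \<phi> 2" using lin[of "k div 2" "k mod 2"] kk k \<phi>0 by simp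
      then show ?thesis by blast
    next
      assume "k mod 2 = 1"
      then have "t = (k div 2) * \<phi> 2 + \<phi> 1" using lin[of "k div 2" "k mod 2"] kk k by simp
      then show ?thesis by blast
    qed
  qed
  have p0: "\<phi> 2 \<noteq> 0" using \<phi>inj[of 2 0] \<phi>0 by auto
  have nq: "j * \<phi> 2 \<noteq> \<phi> 1" for j
  proof
    assume "j * \<phi> 2 = \<phi> 1"
    then have "\<phi> (2 * j + 0) = \<phi> 1" using lin[of j 0] \<phi>0 by simp
    then have "2 * j + 0 = 1" by (rule \<phi>inj)
    then show False by presburger
  qed
  have "\<phi> 2 = 2 \<or> \<phi> 2 = -2" by (rule arith_pm2[OF p0 cover nq])
  then show ?thesis using \<phi>[of 2] by auto
qed

lemma lam_e2_form: assumes c: "c \<in> carrier B"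
  shows "\<exists>d. (d = 0 \<or> d = -4) \<and> lam (e 2) c = c \<boxplus> e d"
proof -
  obtain p where p: "p = 2 \<or> p = -2" and cp: "mi c \<odot> e 2 \<odot> c = e p" using conj2[OF c] by blast
  have "e 2 \<odot> c = c \<odot> (mi c \<odot> e 2 \<odot> c)" using c by (simp add: M_assoc)
  also have "\<dots> = c \<odot> e p" using cp by simp
  also have "\<dots> = c \<boxplus> lam c (e p)" by (rule mul_eq) (simp_all add: c)
  also have "\<dots> = c \<boxplus> e (sg c * p)" using lam_e c by simp
  finally have eq: "e 2 \<odot> c = c \<boxplus> e (sg c * p)" .
  have "e 2 \<odot> c = e 2 \<boxplus> lam (e 2) c" by (rule mul_eq) (simp_all add: c)
  then have "lam (e 2) c = ng (e 2) \<boxplus> (c \<boxplus> e (sg c * p))" using eq c by simp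
  also have "\<dots> = c \<boxplus> e (sg c * p - 2)"
    using c e_cen[of c "-2"] by (simp add: e_neg A_assoc[symmetric] A_assoc e_add)
  finally have "lam (e 2) c = c \<boxplus> e (sg c * p - 2)" .
  moreover have "sg c * p - 2 = 0 \<or> sg c * p - 2 = -4" using sg_pm[OF c] p by auto
  ultimately show ?thesis by blast
qed

lemma lam_e2: assumes c: "c \<in> carrier B" shows "lam (e 2) c = c"
proof -
  obtain d where d: "d = 0 \<or> d = -4" and ld: "lam (e 2) c = c \<boxplus> e d" using lam_e2_form[OF c] by blast
  obtain d' where d': "d' = 0 \<or> d' = -4" and ld': "lam (e 2) (c \<boxplus> c) = c \<boxplus> c \<boxplus> e d'"
    using lam_e2_form[of "c \<boxplus> c"] c by blast
  have "lam (e 2) (c \<boxplus> c) = c \<boxplus> e d \<boxplus> (c \<boxplus> e d)" using lam_add[of "e 2" c c] c ld by simp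
  also have "\<dots> = c \<boxplus> (e d \<boxplus> c) \<boxplus> e d" using c by (simp add: A_assoc)
  also have "\<dots> = c \<boxplus> (c \<boxplus> e d) \<boxplus> e d" using e_cen[OF c, of d] by simp
  also have "\<dots> = c \<boxplus> c \<boxplus> (e d \<boxplus> e d)" using c by (simp add: A_assoc)
  also have "\<dots> = c \<boxplus> c \<boxplus> e (d + d)" by (simp add: e_add)
  finally have "c \<boxplus> c \<boxplus> e d' = c \<boxplus> c \<boxplus> e (d + d)" using ld' by simp
  then have "e d' = e (d + d)" using A.l_cancel[of "c \<boxplus> c" "e d'" "e (d + d)"] c by simp
  then have "d' = d + d" using e_inj by blast
  then have "d = 0" using d d' by auto
  then show ?thesis using ld c by simp
qed

lemma lam_e2j: assumes c: "c \<in> carrier B" shows "lam (e (2 * j)) c = c"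
proof (induct j rule: int_induct[where k = 0])
  case base then show ?case using c by simp
next
  case (step1 i)
  have "e (2 * (i + 1)) = e 2 \<odot> e (2 * i)" using mul_e[of 2 "2 * i"] sg_e2 by (simp add: algebra_simps)
  then have "lam (e (2 * (i + 1))) c = lam (e 2) (lam (e (2 * i)) c)" using lam_mul c by simp
  then show ?case using step1 lam_e2 c by simp
next
  case (step2 i)
  have "e (2 * i) = e 2 \<odot> e (2 * (i - 1))" using mul_e[of 2 "2 * (i - 1)"] sg_e2 by (simp add: algebra_simps)
  then have "lam (e (2 * i)) c = lam (e 2) (lam (e (2 * (i - 1))) c)" using lam_mul c by simp
  also have "\<dots> = lam (e (2 * (i - 1))) c" using lam_e2 c by simp
  finally show ?case using step2 by simp
qed


definition Zs where "Zs = range (\<lambda>j. e (2 * j))"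

lemma Zs_mem: "e (2 * j) \<in> Zs" unfolding Zs_def by (rule rangeI)

lemma sg_even: "sg (e (2 * j)) = 1"
proof -
  have "e (sg (e (2 * j))) = lam (e (2 * j)) g" using sg_prop by simp
  also have "\<dots> = e 1" using lam_e2j g e_1 by simp
  finally show ?thesis using e_inj by blast
qed

lemma Z_soc: "Zs \<subseteq> Soc B"
  unfolding Zs_def Soc_def add_centre_def
  using lam_e2j e_cen by (auto simp: blambda_eq)

lemma Z_cyc: "add_inf_cyclic B Zs"
  unfolding add_inf_cyclic_def
proof
  have "inj (\<lambda>j. e (2 * j))" using e_inj by (auto simp: inj_def)
  then show "infinite Zs" unfolding Zs_def
    using finite_imageD infinite_UNIV_int by blast
  show "\<exists>h\<in>carrier B. Zs = range (\<lambda>k::int. h [^]\<^bsub>add_grp B\<^esub> k)"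
    by (rule bexI[of _ "e 2"]) (auto simp: Zs_def e_pow)
qed

lemma conj_soc: assumes x: "x \<in> carrier B" and h: "h \<in> carrier B"
  and lh: "\<And>c. c \<in> carrier B \<Longrightarrow> lam h c = c"
  and ch: "\<And>c. c \<in> carrier B \<Longrightarrow> lam x h \<boxplus> c = c \<boxplus> lam x h"
  shows "x \<odot> h \<odot> mi x = lam x h"
proof -
  have "x \<odot> h \<odot> mi x = (x \<odot> h) \<boxplus> lam (x \<odot> h) (mi x)" by (rule mul_eq) (simp_all add: x h)
  also have "\<dots> = x \<boxplus> lam x h \<boxplus> lam x (lam h (mi x))"
    using mul_eq[OF x h] lam_mul x h by simp
  also have "\<dots> = x \<boxplus> lam x h \<boxplus> ng x" using lh x by simp
  also have "\<dots> = lam x h \<boxplus> x \<boxplus> ng x" using ch[OF x] x h by simp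
  also have "\<dots> = lam x h" using x h by (simp add: A_assoc)
  finally show ?thesis .
qed

lemma Z_ideal: "brace_ideal Zs B"
  unfolding brace_ideal_def
proof (intro conjI ballI)
  have sub: "Zs \<subseteq> carrier B" unfolding Zs_def by auto
  show "Zs \<lhd> add_grp B"
    unfolding A.normal_inv_iff
  proof (intro conjI ballI)
    show "subgroup Zs (add_grp B)"
    proof (rule A.subgroupI)
      show "Zs \<subseteq> carrier (add_grp B)" using sub by simp
      show "Zs \<noteq> {}" unfolding Zs_def by simp
      fix a b assume a: "a \<in> Zs" and b: "b \<in> Zs"
      then obtain i j where "a = e (2 * i)" "b = e (2 * j)" unfolding Zs_def by auto
      then have "ng a = e (2 * (- i))" "a \<boxplus> b = e (2 * (i + j))"
        by (simp_all add: e_neg e_add algebra_simps)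
      then show "inv\<^bsub>add_grp B\<^esub> a \<in> Zs" "a \<otimes>\<^bsub>add_grp B\<^esub> b \<in> Zs"
        using Zs_mem[of "- i"] Zs_mem[of "i + j"] by simp_all
    qed
    fix x h assume x: "x \<in> carrier (add_grp B)" and h: "h \<in> Zs"
    then obtain j where hj: "h = e (2 * j)" unfolding Zs_def by auto
    have "x \<boxplus> h \<boxplus> ng x = h \<boxplus> x \<boxplus> ng x" using x e_cen[of x "2 * j"] hj by simp
    also have "\<dots> = h" using x hj by (simp add: A_assoc)
    finally have "x \<boxplus> h \<boxplus> ng x = h" .
    then show "x \<otimes>\<^bsub>add_grp B\<^esub> h \<otimes>\<^bsub>add_grp B\<^esub> inv\<^bsub>add_grp B\<^esub> x \<in> Zs" using h by simp
  qed
  show "Zs \<lhd> mul_grp B"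
    unfolding M.normal_inv_iff
  proof (intro conjI ballI)
    show "subgroup Zs (mul_grp B)"
    proof (rule M.subgroupI)
      show "Zs \<subseteq> carrier (mul_grp B)" using sub by simp
      show "Zs \<noteq> {}" unfolding Zs_def by simp
      fix a b assume a: "a \<in> Zs" and b: "b \<in> Zs"
      then obtain i j where ai: "a = e (2 * i)" and bj: "b = e (2 * j)" unfolding Zs_def by auto
      have "e (2 * (- i)) \<odot> e (2 * i) = e (2 * (- i) + sg (e (2 * (- i))) * (2 * i))" by (rule mul_e)
      then have "e (2 * (- i)) \<odot> e (2 * i) = ze" unfolding sg_even by simp
      then have "mi a = e (2 * (- i))" using M.inv_equality[of "e (2 * (- i))" "e (2 * i)"] ai
        by (simp add: one_eq)
      then show "inv\<^bsub>mul_grp B\<^esub> a \<in> Zs" using Zs_mem[of "- i"] by simp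
      have "a \<odot> b = e (2 * (i + j))" using ai bj mul_e[of "2 * i" "2 * j"] sg_even
        by (simp add: algebra_simps)
      then show "a \<otimes>\<^bsub>mul_grp B\<^esub> b \<in> Zs" using Zs_mem[of "i + j"] by simp
    qed
    fix x h assume x: "x \<in> carrier (mul_grp B)" and h: "h \<in> Zs"
    then obtain j where hj: "h = e (2 * j)" unfolding Zs_def by auto
    have "x \<odot> h \<odot> mi x = lam x h"
      using x hj by (intro conj_soc) (simp_all add: lam_e2j lam_e e_cen)
    also have "\<dots> = e (2 * (sg x * j))" using x hj lam_e by (simp add: algebra_simps)
    finally show "x \<otimes>\<^bsub>mul_grp B\<^esub> h \<otimes>\<^bsub>mul_grp B\<^esub> inv\<^bsub>mul_grp B\<^esub> x \<in> Zs"
      using Zs_mem by simp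
  qed
  fix b assume b: "b \<in> carrier B"
  show "blambda B b ` Zs \<subseteq> Zs"
  proof
    fix y assume "y \<in> blambda B b ` Zs"
    then obtain j where "y = lam b (e (2 * j))" unfolding Zs_def by (auto simp: blambda_eq)
    then have "y = e (2 * (sg b * j))" using lam_e b by (simp add: algebra_simps)
    then show "y \<in> Zs" using Zs_mem by simp
  qed
qed

end

lemma (in group) inj_pow_of_infinite:
  assumes x: "x \<in> carrier G" and inf: "infinite (range (\<lambda>k::int. x [^] k))"
  shows "inj (\<lambda>k::int. x [^] k)"
proof (rule ccontr)
  assume "\<not> inj (\<lambda>k::int. x [^] k)"
  then obtain m n :: int where mn: "m \<noteq> n" "x [^] m = x [^] n" unfolding inj_def by blast
  define d where "d = \<bar>m - n\<bar>"
  have d0: "d > 0" using mn by (simp add: d_def)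
  have "x [^] (m - n) = \<one>" using mn x by (simp add: int_pow_diff)
  then have xd: "x [^] d = \<one>"
  proof (cases "m > n")
    case True then show ?thesis using \<open>x [^] (m - n) = \<one>\<close> by (simp add: d_def)
  next
    case False
    then have "d = - (m - n)" by (simp add: d_def)
    then show ?thesis using \<open>x [^] (m - n) = \<one>\<close> int_pow_neg[OF x, of "m - n"] by simp
  qed
  have "x [^] k = x [^] (k mod d)" for k
  proof -
    have "x [^] k = x [^] (d * (k div d) + k mod d)" by simp
    also have "\<dots> = x [^] (d * (k div d)) \<otimes> x [^] (k mod d)" by (rule int_pow_mult[OF x])
    also have "\<dots> = (x [^] d) [^] (k div d) \<otimes> x [^] (k mod d)"
      by (simp add: int_pow_pow[OF x])
    also have "\<dots> = x [^] (k mod d)" using xd x by simp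
    finally show ?thesis .
  qed
  then have "range (\<lambda>k::int. x [^] k) \<subseteq> (\<lambda>k. x [^] k) ` {0..<d}"
  proof (intro subsetI)
    fix y assume "y \<in> range (\<lambda>k::int. x [^] k)"
    then obtain k :: int where "y = x [^] k" by blast
    then have "y = x [^] (k mod d)" using \<open>\<And>k. x [^] k = x [^] (k mod d)\<close> by simp
    moreover have "k mod d \<in> {0..<d}" using d0 by simp
    ultimately show "y \<in> (\<lambda>k. x [^] k) ` {0..<d}" by blast
  qed
  then show False using inf finite_subset by blast
qed

locale quot_loc = brace_loc +
  fixes I
  assumes I: "brace_ideal I B"
begin

lemma nA: "I \<lhd> add_grp B" and nM: "I \<lhd> mul_grp B" and lamI: "b \<in> carrier B \<Longrightarrow> h \<in> I \<Longrightarrow> lam b h \<in> I"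
  using I by (auto simp: brace_ideal_def blambda_eq)

lemma I_sub: "I \<subseteq> carrier B"
  using normal_imp_subgroup[OF nA] subgroup.subset by fastforce

abbreviation pr where "pr a \<equiv> I #>\<^bsub>add_grp B\<^esub> a"

lemma coset_eq: assumes a: "a \<in> carrier B" shows "I #>\<^bsub>mul_grp B\<^esub> a = pr a"
proof -
  have "I #>\<^bsub>mul_grp B\<^esub> a = a <#\<^bsub>mul_grp B\<^esub> I" using normal.coset_eq[OF nM] a by simp
  also have "\<dots> = a <#\<^bsub>add_grp B\<^esub> I"
  proof
    show "a <#\<^bsub>mul_grp B\<^esub> I \<subseteq> a <#\<^bsub>add_grp B\<^esub> I"
    proof
      fix x assume "x \<in> a <#\<^bsub>mul_grp B\<^esub> I"
      then obtain h where h: "h \<in> I" "x = a \<odot> h" unfolding l_coset_def by auto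
      then have "x = a \<boxplus> lam a h" using mul_eq a I_sub by auto
      then show "x \<in> a <#\<^bsub>add_grp B\<^esub> I" using lamI[OF a h(1)] unfolding l_coset_def by auto
    qed
    show "a <#\<^bsub>add_grp B\<^esub> I \<subseteq> a <#\<^bsub>mul_grp B\<^esub> I"
    proof
      fix x assume "x \<in> a <#\<^bsub>add_grp B\<^esub> I"
      then obtain h where h: "h \<in> I" "x = a \<boxplus> h" unfolding l_coset_def by auto
      have hc: "h \<in> carrier B" using h I_sub by auto
      have h': "lam (mi a) h \<in> I" using lamI h a by auto
      have "a \<odot> lam (mi a) h = a \<boxplus> lam a (lam (mi a) h)" by (rule mul_eq) (simp_all add: a hc)
      also have "lam a (lam (mi a) h) = h" using a hc by (rule lam_inv2)
      finally have "x = a \<odot> lam (mi a) h" using h by simp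
      then show "x \<in> a <#\<^bsub>mul_grp B\<^esub> I" using h' unfolding l_coset_def by auto
    qed
  qed
  also have "\<dots> = pr a" using normal.coset_eq[OF nA] a by simp
  finally show ?thesis .
qed

lemma rcosets_eq: "rcosets\<^bsub>mul_grp B\<^esub> I = rcosets\<^bsub>add_grp B\<^esub> I"
  unfolding RCOSETS_def using coset_eq by simp

lemma addQ: "add_grp (quot_brace B I) = add_grp B Mod I"
  by (simp add: add_grp_def quot_brace_def FactGroup_def)

lemma mulQ: "mul_grp (quot_brace B I) = mul_grp B Mod I"
  unfolding FactGroup_def rcosets_eq by (simp add: mul_grp_def[of "quot_brace B I"] quot_brace_def)

lemma grpA: "group (add_grp (quot_brace B I))"
  unfolding addQ by (rule normal.factorgroup_is_group[OF nA])

lemma grpM: "group (mul_grp (quot_brace B I))"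
  unfolding mulQ by (rule normal.factorgroup_is_group[OF nM])

lemma carrierQ: "carrier (quot_brace B I) = pr ` carrier B"
  by (auto simp: quot_brace_def RCOSETS_def)

lemma pr_add: "a \<in> carrier B \<Longrightarrow> b \<in> carrier B \<Longrightarrow> pr (a \<boxplus> b) = bplus (quot_brace B I) (pr a) (pr b)"
  using normal.rcos_sum[OF nA, of a b] by (simp add: quot_brace_def)

lemma pr_mul: "a \<in> carrier B \<Longrightarrow> b \<in> carrier B \<Longrightarrow> pr (a \<odot> b) = btimes (quot_brace B I) (pr a) (pr b)"
  using normal.rcos_sum[OF nM, of a b] by (simp add: quot_brace_def coset_eq)

lemma pr_ze: "pr ze = I"
  using A.coset_mult_one[of I] I_sub by simp

lemma zeroQ: "bzero (quot_brace B I) = I" by (simp add: quot_brace_def)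
lemma oneQ: "bone (quot_brace B I) = I" by (simp add: quot_brace_def)

lemma homA: "pr \<in> hom (add_grp B) (add_grp (quot_brace B I))"
  unfolding addQ by (rule normal.r_coset_hom_Mod[OF nA])

lemma homM: "pr \<in> hom (mul_grp B) (mul_grp (quot_brace B I))"
proof -
  have "(\<lambda>a. I #>\<^bsub>mul_grp B\<^esub> a) \<in> hom (mul_grp B) (mul_grp (quot_brace B I))"
    unfolding mulQ by (rule normal.r_coset_hom_Mod[OF nM])
  moreover have "\<And>a. a \<in> carrier B \<Longrightarrow> I #>\<^bsub>mul_grp B\<^esub> a = pr a" by (rule coset_eq)
  ultimately show ?thesis unfolding hom_def Pi_def by simp
qed

lemma ghA: "group_hom (add_grp B) (add_grp (quot_brace B I)) pr"
  by (simp add: group_hom_def group_hom_axioms_def homA grpA A.group_axioms)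

lemma ghM: "group_hom (mul_grp B) (mul_grp (quot_brace B I)) pr"
  by (simp add: group_hom_def group_hom_axioms_def homM grpM M.group_axioms)

lemma pr_ng: "a \<in> carrier B \<Longrightarrow> inv\<^bsub>add_grp (quot_brace B I)\<^esub> (pr a) = pr (ng a)"
  using group_hom.hom_inv[OF ghA, of a] by simp

lemma pr_mi: "a \<in> carrier B \<Longrightarrow> inv\<^bsub>mul_grp (quot_brace B I)\<^esub> (pr a) = pr (mi a)"
  using group_hom.hom_inv[OF ghM, of a] by simp

lemma pr_pow: "a \<in> carrier B \<Longrightarrow> (pr a) [^]\<^bsub>add_grp (quot_brace B I)\<^esub> (k::int) = pr (a [^]\<^bsub>add_grp B\<^esub> k)"
  using group_hom.hom_int_pow[OF ghA, of a k] by simp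

lemma bneg_pr: "a \<in> carrier B \<Longrightarrow> bneg (quot_brace B I) (pr a) = pr (ng a)"
  by (simp add: bneg_def pr_ng)

lemma isQ: "is_brace (quot_brace B I)"
  unfolding is_brace_def
proof (intro conjI grpA grpM ballI)
  fix U V W assume "U \<in> carrier (quot_brace B I)" "V \<in> carrier (quot_brace B I)" "W \<in> carrier (quot_brace B I)"
  then obtain a b c where abc: "a \<in> carrier B" "b \<in> carrier B" "c \<in> carrier B" "U = pr a" "V = pr b" "W = pr c"
    unfolding carrierQ by auto
  have "btimes (quot_brace B I) U (bplus (quot_brace B I) V W) = pr (a \<odot> (b \<boxplus> c))"
    using abc by (simp add: pr_add pr_mul)
  also have "\<dots> = pr (a \<odot> b \<boxplus> ng a \<boxplus> a \<odot> c)" using abc brace_id by simp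
  also have "\<dots> = bplus (quot_brace B I) (bplus (quot_brace B I) (btimes (quot_brace B I) U V) (bneg (quot_brace B I) U)) (btimes (quot_brace B I) U W)"
    using abc by (simp add: pr_add pr_mul bneg_pr)
  finally show "btimes (quot_brace B I) U (bplus (quot_brace B I) V W) = bplus (quot_brace B I) (bplus (quot_brace B I) (btimes (quot_brace B I) U V) (bneg (quot_brace B I) U)) (btimes (quot_brace B I) U W)" .
qed

lemma lam_pr: "a \<in> carrier B \<Longrightarrow> b \<in> carrier B \<Longrightarrow> blambda (quot_brace B I) (pr a) (pr b) = pr (lam a b)"
  by (simp add: blambda_def bneg_pr pr_add pr_mul)

lemma conj_pr: "a \<in> carrier B \<Longrightarrow> b \<in> carrier B \<Longrightarrow>
  btimes (quot_brace B I) (btimes (quot_brace B I) (inv\<^bsub>mul_grp (quot_brace B I)\<^esub> (pr a)) (pr b)) (pr a) = pr (mi a \<odot> b \<odot> a)"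
  by (simp add: pr_mi pr_mul)

lemma pr_self: "a \<in> carrier B \<Longrightarrow> a \<in> pr a"
  using A.rcos_self[of a I] normal_imp_subgroup[OF nA] by simp

lemma pr_I: "a \<in> I \<Longrightarrow> pr a = I"
  using A.coset_join2[of a I] normal_imp_subgroup[OF nA] I_sub by auto


lemma refine:
  assumes K: "brace_ideal K B" and IK: "I \<subseteq> K"
    and cyc: "add_inf_cyclic (quot_brace B I) (quot_sub B K I)"
    and cen: "quot_sub B K I \<subseteq> add_centre (quot_brace B I)"
  shows "\<exists>J. brace_ideal J B \<and> I \<subseteq> J \<and> J \<subseteq> K \<and>
     add_inf_cyclic (quot_brace B I) (quot_sub B J I) \<and> quot_sub B J I \<subseteq> Soc (quot_brace B I) \<and>
     Factorial_Ring.prime (card (quot_sub B K J))"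
proof -
  let ?Q = "quot_brace B I"
  have Ysub: "quot_sub B K I = pr ` K" by (simp add: quot_sub_def)
  obtain g where g: "g \<in> carrier ?Q" and Yr: "quot_sub B K I = range (\<lambda>k::int. g [^]\<^bsub>add_grp ?Q\<^esub> k)"
    and infY: "infinite (quot_sub B K I)"
    using cyc unfolding add_inf_cyclic_def by blast
  interpret Qb: brace_loc ?Q by unfold_locales (rule isQ)
  have inj: "inj (\<lambda>k::int. g [^]\<^bsub>add_grp ?Q\<^esub> k)"
    using group.inj_pow_of_infinite[OF grpA, of g] g infY Yr by simp
  have KA: "K \<lhd> add_grp B" and KM: "K \<lhd> mul_grp B" and lamK: "\<And>b h. b \<in> carrier B \<Longrightarrow> h \<in> K \<Longrightarrow> lam b h \<in> K"
    using K by (auto simp: brace_ideal_def blambda_eq)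
  have Ksub: "K \<subseteq> carrier B"
    using normal_imp_subgroup[OF KA] subgroup.subset by fastforce
  have inY: "\<exists>k0\<in>K. g [^]\<^bsub>add_grp ?Q\<^esub> (k::int) = pr k0" for k
  proof -
    have "g [^]\<^bsub>add_grp ?Q\<^esub> k \<in> quot_sub B K I" unfolding Yr by (rule rangeI)
    then show ?thesis unfolding Ysub by auto
  qed
  have inYr: "pr k0 \<in> range (\<lambda>k::int. g [^]\<^bsub>add_grp ?Q\<^esub> k)" if "k0 \<in> K" for k0
    using that Ysub Yr by auto
  interpret Qc: core_loc ?Q g
  proof unfold_locales
    show "g \<in> carrier ?Q" by (rule g)
    show "inj (\<lambda>k::int. g [^]\<^bsub>add_grp ?Q\<^esub> k)" by (rule inj)
  next
    fix k :: int and x assume x: "x \<in> carrier ?Q"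
    have "g [^]\<^bsub>add_grp ?Q\<^esub> k \<in> add_centre ?Q" using cen Yr by auto
    then show "bplus ?Q (g [^]\<^bsub>add_grp ?Q\<^esub> k) x = bplus ?Q x (g [^]\<^bsub>add_grp ?Q\<^esub> k)"
      using x unfolding add_centre_def by auto
  next
    fix b and k :: int assume b: "b \<in> carrier ?Q"
    obtain b0 where b0: "b0 \<in> carrier B" "b = pr b0" using b carrierQ by auto
    obtain k0 where k0: "k0 \<in> K" "g [^]\<^bsub>add_grp ?Q\<^esub> k = pr k0" using inY by blast
    have "bplus ?Q (inv\<^bsub>add_grp ?Q\<^esub> b) (btimes ?Q b (g [^]\<^bsub>add_grp ?Q\<^esub> k)) = blambda ?Q (pr b0) (pr k0)"
      using b0 k0 by (simp add: blambda_def bneg_def)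
    also have "\<dots> = pr (lam b0 k0)" using lam_pr b0 k0 Ksub by auto
    finally show "\<exists>l::int. bplus ?Q (inv\<^bsub>add_grp ?Q\<^esub> b) (btimes ?Q b (g [^]\<^bsub>add_grp ?Q\<^esub> k)) = g [^]\<^bsub>add_grp ?Q\<^esub> l"
      using inYr[OF lamK[OF b0(1) k0(1)]] by auto
  next
    fix b and k :: int assume b: "b \<in> carrier ?Q"
    obtain b0 where b0: "b0 \<in> carrier B" "b = pr b0" using b carrierQ by auto
    obtain k0 where k0: "k0 \<in> K" "g [^]\<^bsub>add_grp ?Q\<^esub> k = pr k0" using inY by blast
    have "btimes ?Q (btimes ?Q (inv\<^bsub>mul_grp ?Q\<^esub> b) (g [^]\<^bsub>add_grp ?Q\<^esub> k)) b = pr (mi b0 \<odot> k0 \<odot> b0)"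
      using b0 k0 conj_pr Ksub by auto
    moreover have m: "mi b0 \<odot> k0 \<odot> b0 \<in> K"
      using normal.inv_op_closed1[OF KM, of b0 k0] b0 k0 by simp
    have "pr (mi b0 \<odot> k0 \<odot> b0) \<in> range (\<lambda>k::int. g [^]\<^bsub>add_grp ?Q\<^esub> k)" by (rule inYr[OF m])
    then obtain l :: int where "pr (mi b0 \<odot> k0 \<odot> b0) = g [^]\<^bsub>add_grp ?Q\<^esub> l" by blast
    ultimately show "\<exists>l::int. btimes ?Q (btimes ?Q (inv\<^bsub>mul_grp ?Q\<^esub> b) (g [^]\<^bsub>add_grp ?Q\<^esub> k)) b = g [^]\<^bsub>add_grp ?Q\<^esub> l"
      by auto
  qed
  have eg: "Qc.e k = g [^]\<^bsub>add_grp ?Q\<^esub> k" for k by (simp add: Qc.e_def)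
  have Zsub: "Qc.Zs \<subseteq> pr ` K"
  proof
    fix z assume "z \<in> Qc.Zs"
    then obtain j where "z = Qc.e (2 * j)" unfolding Qc.Zs_def by blast
    then show "z \<in> pr ` K" using inY[of "2 * j"] eg by auto
  qed
  have Zid: "brace_ideal Qc.Zs ?Q" by (rule Qc.Z_ideal)
  then have ZA: "Qc.Zs \<lhd> add_grp ?Q" and ZM: "Qc.Zs \<lhd> mul_grp ?Q"
    and lamZ: "\<And>U z. U \<in> carrier ?Q \<Longrightarrow> z \<in> Qc.Zs \<Longrightarrow> blambda ?Q U z \<in> Qc.Zs"
    unfolding brace_ideal_def by auto
  have ZAs: "subgroup Qc.Zs (add_grp ?Q)" by (rule normal_imp_subgroup[OF ZA])
  have ZMs: "subgroup Qc.Zs (mul_grp ?Q)" by (rule normal_imp_subgroup[OF ZM])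
  have IZ: "I \<in> Qc.Zs" using subgroup.one_closed[OF ZAs] by (simp add: zeroQ)
  define J where "J = {a \<in> carrier B. pr a \<in> Qc.Zs}"
  have Jsub: "J \<subseteq> carrier B" unfolding J_def by auto
  have zeJ: "ze \<in> J" unfolding J_def using IZ pr_ze by simp
  have JAs: "subgroup J (add_grp B)"
  proof (rule A.subgroupI)
    show "J \<subseteq> carrier (add_grp B)" using Jsub by simp
    show "J \<noteq> {}" using zeJ by blast
    fix a b assume a: "a \<in> J" and b: "b \<in> J"
    then have ac: "a \<in> carrier B" and bc: "b \<in> carrier B" and pa: "pr a \<in> Qc.Zs" and pb: "pr b \<in> Qc.Zs"
      unfolding J_def by auto
    have "pr (ng a) \<in> Qc.Zs" using subgroup.m_inv_closed[OF ZAs pa] pr_ng[OF ac] by simp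
    then show "inv\<^bsub>add_grp B\<^esub> a \<in> J" unfolding J_def using ac by simp
    have "pr (a \<boxplus> b) \<in> Qc.Zs" using subgroup.m_closed[OF ZAs pa pb] pr_add[OF ac bc] by simp
    then show "a \<otimes>\<^bsub>add_grp B\<^esub> b \<in> J" unfolding J_def using ac bc by simp
  qed
  have JMs: "subgroup J (mul_grp B)"
  proof (rule M.subgroupI)
    show "J \<subseteq> carrier (mul_grp B)" using Jsub by simp
    show "J \<noteq> {}" using zeJ by blast
    fix a b assume a: "a \<in> J" and b: "b \<in> J"
    then have ac: "a \<in> carrier B" and bc: "b \<in> carrier B" and pa: "pr a \<in> Qc.Zs" and pb: "pr b \<in> Qc.Zs"
      unfolding J_def by auto
    have "pr (mi a) \<in> Qc.Zs" using subgroup.m_inv_closed[OF ZMs pa] pr_mi[OF ac] by simp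
    then show "inv\<^bsub>mul_grp B\<^esub> a \<in> J" unfolding J_def using ac by simp
    have "pr (a \<odot> b) \<in> Qc.Zs" using subgroup.m_closed[OF ZMs pa pb] pr_mul[OF ac bc] by simp
    then show "a \<otimes>\<^bsub>mul_grp B\<^esub> b \<in> J" unfolding J_def using ac bc by simp
  qed
  have Jid: "brace_ideal J B"
    unfolding brace_ideal_def
  proof (intro conjI ballI subsetI)
    show "J \<lhd> add_grp B" unfolding A.normal_inv_iff
    proof (intro conjI ballI JAs)
      fix x h assume x: "x \<in> carrier (add_grp B)" and h: "h \<in> J"
      then have xc: "x \<in> carrier B" and hc: "h \<in> carrier B" and ph: "pr h \<in> Qc.Zs" unfolding J_def by auto
      have "pr (x \<boxplus> h \<boxplus> ng x) = bplus ?Q (bplus ?Q (pr x) (pr h)) (inv\<^bsub>add_grp ?Q\<^esub> (pr x))"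
        using xc hc by (simp add: pr_add pr_ng)
      also have "\<dots> \<in> Qc.Zs" using normal.inv_op_closed2[OF ZA, of "pr x" "pr h"] ph xc carrierQ by simp
      finally show "x \<otimes>\<^bsub>add_grp B\<^esub> h \<otimes>\<^bsub>add_grp B\<^esub> inv\<^bsub>add_grp B\<^esub> x \<in> J"
        unfolding J_def using xc hc by simp
    qed
    show "J \<lhd> mul_grp B" unfolding M.normal_inv_iff
    proof (intro conjI ballI JMs)
      fix x h assume x: "x \<in> carrier (mul_grp B)" and h: "h \<in> J"
      then have xc: "x \<in> carrier B" and hc: "h \<in> carrier B" and ph: "pr h \<in> Qc.Zs" unfolding J_def by auto
      have "pr (x \<odot> h \<odot> mi x) = btimes ?Q (btimes ?Q (pr x) (pr h)) (inv\<^bsub>mul_grp ?Q\<^esub> (pr x))"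
        using xc hc by (simp add: pr_mul pr_mi)
      also have "\<dots> \<in> Qc.Zs" using normal.inv_op_closed2[OF ZM, of "pr x" "pr h"] ph xc carrierQ by simp
      finally show "x \<otimes>\<^bsub>mul_grp B\<^esub> h \<otimes>\<^bsub>mul_grp B\<^esub> inv\<^bsub>mul_grp B\<^esub> x \<in> J"
        unfolding J_def using xc hc by simp
    qed
    fix b y assume b: "b \<in> carrier B" and y: "y \<in> blambda B b ` J"
    then obtain h where h: "h \<in> J" "y = lam b h" by (auto simp: blambda_eq)
    then have hc: "h \<in> carrier B" and ph: "pr h \<in> Qc.Zs" unfolding J_def by auto
    have "pr (lam b h) = blambda ?Q (pr b) (pr h)" using lam_pr b hc by simp
    also have "\<dots> \<in> Qc.Zs" using lamZ ph b carrierQ by simp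
    finally show "y \<in> J" unfolding J_def using h b hc by simp
  qed
  have IJ: "I \<subseteq> J" unfolding J_def using pr_I IZ I_sub by auto
  have JK: "J \<subseteq> K"
  proof
    fix a assume a: "a \<in> J"
    then have ac: "a \<in> carrier B" and "pr a \<in> Qc.Zs" unfolding J_def by auto
    then obtain k where k: "k \<in> K" "pr a = pr k" using Zsub by auto
    have "a \<in> pr k" using pr_self[OF ac] k by simp
    then obtain h where h: "h \<in> I" "a = h \<boxplus> k" unfolding r_coset_def by auto
    then show "a \<in> K" using subgroup.m_closed[OF normal_imp_subgroup[OF KA], of h k] IK k by auto
  qed
  have qsJ: "quot_sub B J I = Qc.Zs"
  proof
    show "quot_sub B J I \<subseteq> Qc.Zs" unfolding quot_sub_def J_def by auto
    show "Qc.Zs \<subseteq> quot_sub B J I"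
    proof
      fix z assume z: "z \<in> Qc.Zs"
      then obtain k where k: "k \<in> K" "z = pr k" using Zsub by auto
      then have "k \<in> J" unfolding J_def using z Ksub by auto
      then show "z \<in> quot_sub B J I" unfolding quot_sub_def using k by auto
    qed
  qed
  obtain c where c: "c \<in> K" "pr c = Qc.e 1"
    using inY[of 1] eg by auto
  have cc: "c \<in> carrier B" using c Ksub by auto
  have img: "quot_sub B K J = {J, J #>\<^bsub>add_grp B\<^esub> c}"
  proof
    show "quot_sub B K J \<subseteq> {J, J #>\<^bsub>add_grp B\<^esub> c}"
    proof
      fix U assume "U \<in> quot_sub B K J"
      then obtain a where a: "a \<in> K" "U = J #>\<^bsub>add_grp B\<^esub> a" unfolding quot_sub_def by auto
      have ac: "a \<in> carrier B" using a Ksub by auto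
      obtain k where k: "pr a = Qc.e k" using inYr[OF a(1)] eg by auto
      have kk: "k = 2 * (k div 2) + k mod 2" by simp
      have "k mod 2 = 0 \<or> k mod 2 = 1" by auto
      then show "U \<in> {J, J #>\<^bsub>add_grp B\<^esub> c}"
      proof
        assume "k mod 2 = 0"
        then have "pr a = Qc.e (2 * (k div 2))" using k kk by simp
        then have "a \<in> J" unfolding J_def using ac Qc.Zs_mem by simp
        then have "U = J" using a A.coset_join2[of a J] JAs ac by simp
        then show ?thesis by simp
      next
        assume "k mod 2 = 1"
        then have k1: "k - 1 = 2 * (k div 2)" using kk by simp
        have "pr (a \<boxplus> ng c) = bplus ?Q (pr a) (inv\<^bsub>add_grp ?Q\<^esub> (pr c))"
          using ac cc by (simp add: pr_add pr_ng)
        also have "\<dots> = bplus ?Q (Qc.e k) (Qc.e (- 1))" using k c Qc.e_neg by simp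
        also have "\<dots> = Qc.e (2 * (k div 2))" using Qc.e_add k1 by simp
        finally have "a \<boxplus> ng c \<in> J" unfolding J_def using ac cc Qc.Zs_mem by simp
        then have "a \<in> J #>\<^bsub>add_grp B\<^esub> c"
          using subgroup.rcos_module_rev[OF JAs A.group_axioms, of c a] ac cc by simp
        then have "J #>\<^bsub>add_grp B\<^esub> c = J #>\<^bsub>add_grp B\<^esub> a"
          using A.repr_independence[of a J c] JAs cc by simp
        then show ?thesis using a by simp
      qed
    qed
    have "J #>\<^bsub>add_grp B\<^esub> ze = J" using A.coset_join2[of ze J] JAs zeJ by simp
    moreover have "ze \<in> K" using subgroup.one_closed[OF normal_imp_subgroup[OF KA]] by simp
    ultimately show "{J, J #>\<^bsub>add_grp B\<^esub> c} \<subseteq> quot_sub B K J"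
      unfolding quot_sub_def using c by force
  qed
  have neq: "J \<noteq> J #>\<^bsub>add_grp B\<^esub> c"
  proof
    assume "J = J #>\<^bsub>add_grp B\<^esub> c"
    then have "c \<in> J" using A.rcos_self[of c J] JAs cc by simp
    then have "Qc.e 1 \<in> Qc.Zs" using c unfolding J_def by simp
    then obtain j where "Qc.e 1 = Qc.e (2 * j)" unfolding Qc.Zs_def by blast
    then have "1 = 2 * j" using Qc.e_inj by blast
    then show False by presburger
  qed
  have "card (quot_sub B K J) = 2" using img neq by simp
  then have "Factorial_Ring.prime (card (quot_sub B K J))" by simp
  then show ?thesis
    by (intro exI[of _ J]) (simp add: Jid IJ JK qsJ Qc.Z_cyc Qc.Z_soc)
qed

end

definition goodS :: "('a, 'b) brace_scheme \<Rightarrow> 'a set \<Rightarrow> 'a set \<Rightarrow> bool" where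
  "goodS B P R \<longleftrightarrow> (add_inf_cyclic (quot_brace B P) (quot_sub B R P) \<and> quot_sub B R P \<subseteq> Soc (quot_brace B P))
     \<or> Factorial_Ring.prime (card (quot_sub B R P))"

definition chainP :: "('a, 'b) brace_scheme \<Rightarrow> (nat \<Rightarrow> 'a set) \<Rightarrow> nat \<Rightarrow> bool" where
  "chainP B I n \<longleftrightarrow> I 0 = {bzero B} \<and> (\<forall>i\<le>n. brace_ideal (I i) B) \<and> (\<forall>i<n. I i \<subseteq> I (Suc i))
     \<and> (\<forall>i<n. goodS B (I i) (I (Suc i)))"

lemma chain_extend:
  assumes "chainP B I n" "brace_ideal R B" "I n \<subseteq> R" "goodS B (I n) R"
  shows "chainP B (\<lambda>j. if j \<le> n then I j else R) (Suc n)"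
  using assms unfolding chainP_def
  apply (auto simp: less_Suc_eq_le le_Suc_eq)
   apply (subgoal_tac "i = n", force, linarith)
  apply (subgoal_tac "i = n", force, linarith)
  done

lemma chain_exists:
  assumes br: "is_brace B" and ch: "ideal_chain B I n"
    and W: "\<forall>i<n. let Q = quot_brace B (I i); Y = quot_sub B (I (Suc i)) (I i) in
        (add_inf_cyclic Q Y \<and> Y \<subseteq> add_centre Q) \<or> Factorial_Ring.prime (card Y)"
  shows "m \<le> n \<Longrightarrow> \<exists>I' n'. chainP B I' n' \<and> I' n' = I m"
proof (induct m)
  case 0
  have "chainP B (\<lambda>_. I 0) 0" using ch unfolding chainP_def ideal_chain_def by auto
  then show ?case by blast
next
  case (Suc m)
  then obtain I' n' where c: "chainP B I' n'" and e: "I' n' = I m" by auto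
  have m: "m < n" using Suc by simp
  have idm: "brace_ideal (I m) B" and idS: "brace_ideal (I (Suc m)) B" and sub: "I m \<subseteq> I (Suc m)"
    using ch m unfolding ideal_chain_def by auto
  have Wm: "(add_inf_cyclic (quot_brace B (I m)) (quot_sub B (I (Suc m)) (I m)) \<and>
      quot_sub B (I (Suc m)) (I m) \<subseteq> add_centre (quot_brace B (I m))) \<or>
      Factorial_Ring.prime (card (quot_sub B (I (Suc m)) (I m)))"
    using W m by (simp add: Let_def)
  then show ?case
  proof
    assume h: "add_inf_cyclic (quot_brace B (I m)) (quot_sub B (I (Suc m)) (I m)) \<and>
      quot_sub B (I (Suc m)) (I m) \<subseteq> add_centre (quot_brace B (I m))"
    interpret ql: quot_loc B "I m" by unfold_locales (simp_all add: br idm)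
    obtain J where J: "brace_ideal J B" "I m \<subseteq> J" "J \<subseteq> I (Suc m)"
      "add_inf_cyclic (quot_brace B (I m)) (quot_sub B J (I m))" "quot_sub B J (I m) \<subseteq> Soc (quot_brace B (I m))"
      "Factorial_Ring.prime (card (quot_sub B (I (Suc m)) J))"
      using ql.refine[OF idS sub] h by blast
    define I2 where "I2 = (\<lambda>j. if j \<le> n' then I' j else J)"
    have c2: "chainP B I2 (Suc n')" unfolding I2_def
      by (rule chain_extend[OF c J(1)]) (use e J in \<open>auto simp: goodS_def\<close>)
    have e2: "I2 (Suc n') = J" by (simp add: I2_def)
    have c3: "chainP B (\<lambda>j. if j \<le> Suc n' then I2 j else I (Suc m)) (Suc (Suc n'))"
      by (rule chain_extend[OF c2 idS]) (use e2 J in \<open>auto simp: goodS_def\<close>)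
    then show ?case by fastforce
  next
    assume h: "Factorial_Ring.prime (card (quot_sub B (I (Suc m)) (I m)))"
    have "chainP B (\<lambda>j. if j \<le> n' then I' j else I (Suc m)) (Suc n')"
      by (rule chain_extend[OF c idS]) (use e sub h in \<open>auto simp: goodS_def\<close>)
    then show ?case by fastforce
  qed
qed

theorem theorem3p17:
  fixes B :: "('a, 'b) brace_scheme"
  assumes "is_brace B"
  shows "weakly_supersoluble B \<longleftrightarrow> supersoluble B"
proof
  assume "weakly_supersoluble B"
  then obtain I n where ch: "ideal_chain B I n" and W: "\<forall>i<n. let Q = quot_brace B (I i); Y = quot_sub B (I (Suc i)) (I i) in
        (add_inf_cyclic Q Y \<and> Y \<subseteq> add_centre Q) \<or> Factorial_Ring.prime (card Y)"
    unfolding weakly_supersoluble_def by blast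
  obtain I' n' where c: "chainP B I' n'" and e: "I' n' = I n"
    using chain_exists[OF assms ch W, of n] by auto
  have "ideal_chain B I' n'" using c e ch unfolding chainP_def ideal_chain_def by auto
  moreover have "\<forall>i<n'. let Q = quot_brace B (I' i); Y = quot_sub B (I' (Suc i)) (I' i) in
        (add_inf_cyclic Q Y \<and> Y \<subseteq> Soc Q) \<or> Factorial_Ring.prime (card Y)"
    using c unfolding chainP_def goodS_def by (simp add: Let_def)
  ultimately show "supersoluble B" unfolding supersoluble_def by blast
next
  assume "supersoluble B"
  then obtain I n where ch: "ideal_chain B I n" and W: "\<forall>i<n. let Q = quot_brace B (I i); Y = quot_sub B (I (Suc i)) (I i) in
        (add_inf_cyclic Q Y \<and> Y \<subseteq> Soc Q) \<or> Factorial_Ring.prime (card Y)"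
    unfolding supersoluble_def by blast
  have "Soc Q \<subseteq> add_centre Q" for Q :: "'a set brace" unfolding Soc_def by auto
  then have "\<forall>i<n. let Q = quot_brace B (I i); Y = quot_sub B (I (Suc i)) (I i) in
        (add_inf_cyclic Q Y \<and> Y \<subseteq> add_centre Q) \<or> Factorial_Ring.prime (card Y)"
    using W by (auto simp: Let_def)
  then show "weakly_supersoluble B" unfolding weakly_supersoluble_def using ch by blast
qed

end
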